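(* Let $m,n\ge 1$ and let $D$ be the $mn\times mn$ Manhattan distance matrix of a rectangular grid with $m$ rows and $n$ columns, i.e. for $s=i+n(j-1)$ and $t=k+n(l-1)$ with $i,k\in\{1,\dots,n\}$ and $j,l\in\{1,\dots,m\}$, $d_{st}=|i-k|+|j-l|$. Then $D$ is a spherical Euclidean distance matrix of embedding dimension $n+m-2$, and the points that generate $D$ lie on a hypersphere of radius $\rho=\tfrac12(n+m-2)^{1/2}$.
   Context: An $N\times N$ matrix $D=(d_{ij})$ is a Euclidean distance matrix (EDM) if there exist points $p^1,\dots,p^N$ in some Euclidean space with $d_{ij}=\|p^i-p^j\|^2$ for all $i,j$; the dimension of their affine span is the embedding dimension $r$ of $D$. An EDM is spherical if it is generated by points lying on a hypersphere. Convention: the generating points are taken in $\mathbb{R}^r$ ($r$ the embedding dimension), and the hypersphere is a hypersphere in $\mathbb{R}^r$. *)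

theory Defs
  imports "HOL-Analysis.Analysis" "HOL-Library.Function_Algebras"
begin

text \<open>Euclidean r-space R^r is modelled as the set of real sequences
  (nat to real) vanishing from index r on; coordinates are indexed 0..r-1.
  The dimension r varies inside the statement, so a type-indexed space
  cannot be used (it would also exclude r = 0).\<close>

definition R_space :: "nat \<Rightarrow> (nat \<Rightarrow> real) set" where
  "R_space r = {x. \<forall>i. r \<le> i \<longrightarrow> x i = 0}"

definition sq_dist :: "nat \<Rightarrow> (nat \<Rightarrow> real) \<Rightarrow> (nat \<Rightarrow> real) \<Rightarrow> real" where
  "sq_dist r x y = (\<Sum>i<r. (x i - y i)^2)"

definition euclid_dist :: "nat \<Rightarrow> (nat \<Rightarrow> real) \<Rightarrow> (nat \<Rightarrow> real) \<Rightarrow> real" where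
  "euclid_dist r x y = sqrt (sq_dist r x y)"

text \<open>Scalar multiplication on nat to real; the library's vector-space
  dimension vector_space.dim is taken with respect to it.\<close>
definition fscale :: "real \<Rightarrow> (nat \<Rightarrow> real) \<Rightarrow> (nat \<Rightarrow> real)" where
  "fscale c x = (\<lambda>i. c * x i)"

text \<open>Dimension of the affine span of a point set = dimension of the linear
  span of the difference vectors.\<close>
definition affine_span_dim :: "(nat \<Rightarrow> real) set \<Rightarrow> nat" where
  "affine_span_dim P = vector_space.dim fscale {x - y | x y. x \<in> P \<and> y \<in> P}"

text \<open>Points p 1, ..., p N in R^r generate the N x N matrix D
  (D is indexed by 1..N), i.e. D s t = squared distance of p s and p t.\<close>
definition generates_EDM ::
  "nat \<Rightarrow> nat \<Rightarrow> (nat \<Rightarrow> nat \<Rightarrow> real) \<Rightarrow> (nat \<Rightarrow> nat \<Rightarrow> real) \<Rightarrow> bool" where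
  "generates_EDM r N D p \<longleftrightarrow>
     (\<forall>s\<in>{1..N}. p s \<in> R_space r) \<and>
     (\<forall>s\<in>{1..N}. \<forall>t\<in>{1..N}. D s t = sq_dist r (p s) (p t))"

definition EDM_with_embedding_dim :: "nat \<Rightarrow> nat \<Rightarrow> (nat \<Rightarrow> nat \<Rightarrow> real) \<Rightarrow> bool" where
  "EDM_with_embedding_dim r N D \<longleftrightarrow>
     (\<exists>p. generates_EDM r N D p \<and> affine_span_dim (p ` {1..N}) = r)"

definition on_hypersphere :: "nat \<Rightarrow> nat \<Rightarrow> (nat \<Rightarrow> nat \<Rightarrow> real) \<Rightarrow> real \<Rightarrow> bool" where
  "on_hypersphere r N p \<rho> \<longleftrightarrow>
     (\<exists>c\<in>R_space r. \<forall>s\<in>{1..N}. euclid_dist r (p s) c = \<rho>)"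

definition spherical_EDM_with_embedding_dim :: "nat \<Rightarrow> nat \<Rightarrow> (nat \<Rightarrow> nat \<Rightarrow> real) \<Rightarrow> bool" where
  "spherical_EDM_with_embedding_dim r N D \<longleftrightarrow>
     (\<exists>p. generates_EDM r N D p \<and> affine_span_dim (p ` {1..N}) = r \<and>
          (\<exists>\<rho>. on_hypersphere r N p \<rho>))"

text \<open>Since (s-1) mod n = i-1 and (s-1) div n = j-1,
  this is the formula below (indices s, t range over 1..m*n).\<close>
definition grid_manhattan :: "nat \<Rightarrow> nat \<Rightarrow> nat \<Rightarrow> real" where
  "grid_manhattan n s t =
     \<bar>real ((s - 1) mod n) - real ((t - 1) mod n)\<bar> +
     \<bar>real ((s - 1) div n) - real ((t - 1) div n)\<bar>"

end

theory Submission
  imports Defs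
begin

lemma vs_fscale: "vector_space fscale"
  by unfold_locales (auto simp: fscale_def fun_eq_iff algebra_simps)

lemma sum_fun_app: "(sum f A) x = (\<Sum>a\<in>A. f a x)"
  by (induct A rule: infinite_finite_induct) auto

lemma sum_split_add: "(\<Sum>k<a+b. f k) = (\<Sum>k<a. f k) + (\<Sum>k<b. f (a+k::nat))"
  by (induct b) (auto simp: add.assoc)

lemma path_sum:
  fixes a b N :: nat assumes "a \<le> N" "b \<le> N"
  shows "(\<Sum>k<N. ((if k < a then 1 else 0) - (if k < b then 1 else 0 :: real))^2) = \<bar>real a - real b\<bar>"
proof -
  have "(\<Sum>k<N. ((if k < a then 1 else 0) - (if k < b then 1 else 0 :: real))^2)
      = (\<Sum>k<N. if k \<in> {min a b..<max a b} then 1 else 0)"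
    by (rule sum.cong) auto
  also have "\<dots> = card ({..<N} \<inter> {min a b..<max a b})"
    by (subst sum.inter_restrict[symmetric]) auto
  also have "{..<N} \<inter> {min a b..<max a b} = {min a b..<max a b}" using assms by auto
  finally show ?thesis by (auto simp: max_def min_def)
qed

lemma aux_div: "(0::nat) < n \<Longrightarrow> (n - 1 + n * k) div n = k"
proof -
  assume a: "0 < n"
  have "(n - 1 + n * k) div n = k + (n - 1) div n" using div_mult_self2[of n "n - 1" k] a by simp
  then show ?thesis using a by simp
qed
lemma aux_mod: "(0::nat) < n \<Longrightarrow> (n - 1 + n * k) mod n = n - 1"
proof -
  assume a: "0 < n"
  have "(n - 1 + n * k) mod n = (n - 1) mod n" using mod_mult_self2[of "n - 1" n k] by simp
  then show ?thesis using a by simp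
qed

lemma idx_bounds:
  fixes m n s :: nat
  assumes "m \<ge> 1" "n \<ge> 1" "s \<in> {1..m*n}"
  shows "(s - 1) mod n \<le> n - 1" "(s - 1) div n \<le> m - 1"
proof -
  have "(s - 1) mod n < n" using assms by simp
  then show "(s - 1) mod n \<le> n - 1" by simp
  have "s - 1 < m * n" using assms by auto
  then have "(s - 1) div n < m" by (rule less_mult_imp_div_less)
  then show "(s - 1) div n \<le> m - 1" by simp
qed

lemma sqd_expand:
  "sq_dist r x (fscale (1/2) (y + z)) = sq_dist r x y / 2 + sq_dist r x z / 2 - sq_dist r y z / 4"
proof -
  have "sq_dist r x (fscale (1/2) (y + z)) = (\<Sum>i<r. (x i - y i)^2 / 2 + (x i - z i)^2 / 2 - (y i - z i)^2/4)"
    unfolding sq_dist_def fscale_def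
    by (rule sum.cong) (auto simp: power2_eq_square field_simps)
  then show ?thesis unfolding sq_dist_def
    by (simp add: sum_divide_distrib sum_subtractf sum.distrib)
qed

lemma sphere_generic:
  fixes m n :: nat
  assumes "m \<ge> 1" and "n \<ge> 1" and g: "generates_EDM (n + m - 2) (m * n) (grid_manhattan n) p"
  shows "on_hypersphere (n + m - 2) (m * n) p (sqrt (real (n + m - 2)) / 2)"
proof -
  let ?r = "n + m - 2" and ?N = "m * n"
  have N1: "1 \<le> ?N" using assms by simp
  have p1: "p 1 \<in> R_space ?r" and pN: "p ?N \<in> R_space ?r" using g N1 by (auto simp: generates_EDM_def)
  define c where "c = fscale (1/2) (p 1 + p ?N)"
  have cR: "c \<in> R_space ?r" using p1 pN by (auto simp: R_space_def c_def fscale_def)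
  have Nm: "(?N - 1) mod n = n - 1" "(?N - 1) div n = m - 1"
  proof -
    have e: "?N - 1 = n - 1 + n * (m - 1)" using assms
      by (cases m; cases n) (auto simp: algebra_simps)
    have a: "(n - 1 + n * (m - 1)) mod n = n - 1" using assms aux_mod by simp
    have b: "(n - 1 + n * (m - 1)) div n = m - 1" using assms aux_div by simp
    show "(?N - 1) mod n = n - 1" "(?N - 1) div n = m - 1" by (simp only: e a b)+
  qed
  have "\<forall>s\<in>{1..?N}. euclid_dist ?r (p s) c = sqrt (real ?r) / 2"
  proof
    fix s assume s: "s \<in> {1..?N}"
    have D: "\<And>t. t \<in> {1..?N} \<Longrightarrow> grid_manhattan n s t = sq_dist ?r (p s) (p t)"
      "grid_manhattan n 1 ?N = sq_dist ?r (p 1) (p ?N)"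
      using g s N1 by (auto simp: generates_EDM_def)
    have im: "(s - 1) mod n \<le> n - 1" "(s - 1) div n \<le> m - 1" using idx_bounds[OF assms(1,2) s] by auto
    have "sq_dist ?r (p s) c = grid_manhattan n s 1 / 2 + grid_manhattan n s ?N / 2 - grid_manhattan n 1 ?N / 4"
      unfolding c_def sqd_expand using D N1 by auto
    also have "\<dots> = real ?r / 4"
      using im assms unfolding grid_manhattan_def Nm by (simp add: of_nat_diff field_simps; linarith)
    finally have eq: "sq_dist ?r (p s) c = real ?r / 4" .
    have s4: "sqrt (4::real) = 2" by (rule real_sqrt_unique) simp_all
    show "euclid_dist ?r (p s) c = sqrt (real ?r) / 2"
      unfolding euclid_dist_def eq real_sqrt_divide s4 ..
  qed
  then show ?thesis using cR unfolding on_hypersphere_def by blast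
qed


definition gp :: "nat \<Rightarrow> nat \<Rightarrow> nat \<Rightarrow> nat \<Rightarrow> real" where
  "gp n m s k = (if k < n - 1 then (if k < (s-1) mod n then 1 else 0)
     else if k < n + m - 2 then (if k - (n-1) < (s-1) div n then 1 else 0) else 0)"

definition ev :: "nat \<Rightarrow> nat \<Rightarrow> real" where "ev k = (\<lambda>i. if i = k then 1 else 0)"

lemma gp_R: "m \<ge> 1 \<Longrightarrow> gp n m s \<in> R_space (n + m - 2)"
  by (auto simp: R_space_def gp_def)

lemma gp_gen:
  fixes m n :: nat
  assumes "m \<ge> 1" and "n \<ge> 1"
  shows "generates_EDM (n + m - 2) (m * n) (grid_manhattan n) (gp n m)"
  unfolding generates_EDM_def
proof (intro conjI ballI)
  fix s assume "s \<in> {1..m*n}" then show "gp n m s \<in> R_space (n + m - 2)" using gp_R assms by auto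
next
  fix s t assume s: "s \<in> {1..m*n}" and t: "t \<in> {1..m*n}"
  define i where "i = (s - 1) mod n"
  define j where "j = (s - 1) div n"
  define i' where "i' = (t - 1) mod n"
  define j' where "j' = (t - 1) div n"
  have b: "i \<le> n - 1" "j \<le> m - 1" "i' \<le> n - 1" "j' \<le> m - 1"
    using idx_bounds[OF assms s] idx_bounds[OF assms t] by (auto simp: i_def j_def i'_def j'_def)
  have r: "n + m - 2 = (n - 1) + (m - 1)" using assms by simp
  have "sq_dist (n + m - 2) (gp n m s) (gp n m t)
     = (\<Sum>k<n-1. ((if k < i then 1 else 0) - (if k < i' then 1 else 0 :: real))^2)
     + (\<Sum>k<m-1. ((if k < j then 1 else 0) - (if k < j' then 1 else 0 :: real))^2)"
    unfolding sq_dist_def r sum_split_add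
  proof (rule arg_cong2[where f="(+)"])
    show "(\<Sum>k<n - 1. (gp n m s k - gp n m t k)\<^sup>2) =
      (\<Sum>k<n - 1. ((if k < i then 1 else 0) - (if k < i' then 1 else 0 :: real))\<^sup>2)"
      by (rule sum.cong) (auto simp: gp_def i_def i'_def)
    show "(\<Sum>k<m - 1. (gp n m s (n - 1 + k) - gp n m t (n - 1 + k))\<^sup>2) =
      (\<Sum>k<m - 1. ((if k < j then 1 else 0) - (if k < j' then 1 else 0 :: real))\<^sup>2)"
      using assms by (intro sum.cong) (auto simp: gp_def j_def j'_def)
  qed
  also have "\<dots> = grid_manhattan n s t"
    unfolding grid_manhattan_def using b
    by (simp add: path_sum i_def j_def i'_def j'_def)
  finally show "grid_manhattan n s t = sq_dist (n + m - 2) (gp n m s) (gp n m t)" by simp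
qed

interpretation fs: vector_space fscale by (rule vs_fscale)

lemma R_span:
  assumes "x \<in> R_space r"
  shows "x \<in> fs.span (ev ` {..<r})"
proof -
  have "x = (\<Sum>k<r. fscale (x k) (ev k))"
  proof
    fix i show "x i = (\<Sum>k<r. fscale (x k) (ev k)) i"
    proof -
      have "(\<Sum>k<r. fscale (x k) (ev k)) i = (\<Sum>k<r. if k = i then x i else 0)"
        unfolding sum_fun_app by (rule sum.cong) (auto simp: fscale_def ev_def)
      then show ?thesis using assms by (cases "i < r") (simp_all add: R_space_def)
    qed
  qed
  also have "\<dots> \<in> fs.span (ev ` {..<r})"
    by (intro fs.span_sum fs.span_scale fs.span_base) auto
  finally show ?thesis .
qed

lemma ev_inj: "inj ev"
proof (rule injI)
  fix x y assume "ev x = ev y"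
  then have "ev x x = ev y x" by simp
  then show "x = y" by (simp add: ev_def split: if_splits)
qed

lemma ev_indep: "fs.independent (ev ` {..<r})"
proof (rule fs.independent_if_scalars_zero)
  fix f x assume h: "(\<Sum>x\<in>ev ` {..<r}. fscale (f x) x) = 0" and x: "x \<in> ev ` {..<r}"
  then obtain k where k: "k < r" "x = ev k" by auto
  have "0 = (\<Sum>y\<in>ev ` {..<r}. fscale (f y) y) k" using h by simp
  also have "\<dots> = (\<Sum>y\<in>ev ` {..<r}. if y = ev k then f y else 0)"
    unfolding sum_fun_app
  proof (rule sum.cong)
    fix y assume "y \<in> ev ` {..<r}"
    then obtain j where j: "y = ev j" by auto
    show "fscale (f y) y k = (if y = ev k then f y else 0)"
    proof (cases "j = k")
      case True then show ?thesis using j by (simp add: fscale_def ev_def)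
    next
      case False
      then have "y \<noteq> ev k" using j injD[OF ev_inj] by blast
      then show ?thesis using j False by (simp add: fscale_def ev_def)
    qed
  qed simp
  also have "\<dots> = f x" using k by (simp add: sum.delta')
  finally show "f x = 0" by simp
qed auto


theorem corollary1:
  fixes m n :: nat
  assumes "m \<ge> 1" and "n \<ge> 1"
  shows "spherical_EDM_with_embedding_dim (n + m - 2) (m * n) (grid_manhattan n)
       \<and> (\<forall>p. generates_EDM (n + m - 2) (m * n) (grid_manhattan n) p \<longrightarrow>
              on_hypersphere (n + m - 2) (m * n) p (sqrt (real (n + m - 2)) / 2))"

proof -
  let ?r = "n + m - 2"
  let ?P = "gp n m ` {1..m*n}"
  let ?S = "{x - y | x y. x \<in> ?P \<and> y \<in> ?P}"
  have nmn: "n \<le> m * n" using assms by simp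
  have sub: "ev ` {..<?r} \<subseteq> ?S"
  proof
    fix v assume "v \<in> ev ` {..<?r}"
    then obtain k where k: "k < ?r" "v = ev k" by auto
    show "v \<in> ?S"
    proof (cases "k < n - 1")
      case True
      have "ev k = gp n m (k+2) - gp n m (k+1)"
      proof
        fix i
        have "(k+2-1) mod n = k+1" "(k+2-1) div n = 0" "(k+1-1) mod n = k" "(k+1-1) div n = 0"
          using True by auto
        then show "ev k i = (gp n m (k+2) - gp n m (k+1)) i" using True by (auto simp: ev_def gp_def)
      qed
      moreover have "k+2 \<le> n" using True by arith
      then have "k+2 \<le> m*n" using nmn by linarith
      then have "k+2 \<in> {1..m*n}" "k+1 \<in> {1..m*n}" by auto
      ultimately show ?thesis using k by blast
    next
      case False
      define l where "l = k - (n - 1)"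
      have l: "l < m - 1" "k = n - 1 + l" using False k assms by (auto simp: l_def)
      have np: "0 < n" using assms by simp
      have "ev k = gp n m (n*(l+1)+1) - gp n m (n*l+1)"
      proof
        fix i
        have "(n*(l+1)+1-1) mod n = 0" "(n*(l+1)+1-1) div n = l+1" "(n*l+1-1) mod n = 0" "(n*l+1-1) div n = l"
          using np by auto
        note md = this
        have rr: "n + m - 2 = n - 1 + (m - 1)" using assms by simp
        consider "i < n - 1" | d where "i = n - 1 + d" "d < m - 1" | "n + m - 2 \<le> i"
        proof -
          assume c1: "i < n - 1 \<Longrightarrow> thesis" and c2: "\<And>d. i = n - 1 + d \<Longrightarrow> d < m - 1 \<Longrightarrow> thesis"
            and c3: "n + m - 2 \<le> i \<Longrightarrow> thesis"
          show thesis
          proof (cases "i < n - 1")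
            case True then show ?thesis by (rule c1)
          next
            case F: False
            show ?thesis
            proof (cases "n + m - 2 \<le> i")
              case True then show ?thesis by (rule c3)
            next
              case False
              show ?thesis by (rule c2[of "i - (n - 1)"]) (use F False rr in linarith)+
            qed
          qed
        qed
        then show "ev k i = (gp n m (n*(l+1)+1) - gp n m (n*l+1)) i"
        proof cases
          case 1
          then have "i \<noteq> k" using l by simp
          then show ?thesis using 1 md by (simp add: ev_def gp_def)
        next
          case 2
          then have lt: "i < n + m - 2" "\<not> i < n - 1" using rr by simp_all
          have "(i = k) = (d = l)" using 2 l by simp
          moreover have dd: "i - (n - 1) = d" using 2 by simp
          ultimately show ?thesis using lt md by (cases "d < l"; cases "d = l") (simp_all add: ev_def gp_def)
        next
          case 3
          then have "i \<noteq> k" using l rr by simp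
          moreover have "\<not> i < n - 1" "\<not> i < n + m - 2" using 3 rr by simp_all
          ultimately show ?thesis by (simp add: ev_def gp_def)
        qed
      qed
      moreover have "n*(l+1)+1 \<in> {1..m*n}" "n*l+1 \<in> {1..m*n}"
      proof -
        have "n * (l + 2) \<le> n * m" using l by (intro mult_le_mono2) simp
        then show "n*(l+1)+1 \<in> {1..m*n}" "n*l+1 \<in> {1..m*n}" using np by (auto simp: algebra_simps)
      qed
      ultimately show ?thesis using k by blast
    qed
  qed
  have spn: "?S \<subseteq> fs.span (ev ` {..<?r})"
  proof
    fix x assume "x \<in> ?S"
    then have "x \<in> R_space ?r" using gp_R[OF assms(1)] by (auto simp: R_space_def)
    then show "x \<in> fs.span (ev ` {..<?r})" by (rule R_span)
  qed
  have dim: "affine_span_dim ?P = ?r" unfolding affine_span_dim_def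
    by (rule fs.dim_unique[OF sub spn ev_indep]) (simp add: card_image inj_on_subset[OF ev_inj])
  have part2: "\<forall>p. generates_EDM (n + m - 2) (m * n) (grid_manhattan n) p \<longrightarrow>
              on_hypersphere (n + m - 2) (m * n) p (sqrt (real (n + m - 2)) / 2)"
    using sphere_generic assms by blast
  have gg: "generates_EDM (n + m - 2) (m * n) (grid_manhattan n) (gp n m)" by (rule gp_gen[OF assms])
  have hs: "on_hypersphere (n + m - 2) (m * n) (gp n m) (sqrt (real (n + m - 2)) / 2)"
    using part2 gg by simp
  have "spherical_EDM_with_embedding_dim (n + m - 2) (m * n) (grid_manhattan n)"
    unfolding spherical_EDM_with_embedding_dim_def
    by (rule exI[of _ "gp n m"]) (intro conjI gg dim exI[of _ "sqrt (real (n + m - 2)) / 2"] hs)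
  then show ?thesis using part2 by (rule conjI)
qed

end
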